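(* Let $U\subset\mathbb{R}^2$ be the bounded complementary domain (interior) of a standardly embedded Warsaw circle, and let $\psi:U\to\operatorname{int}(D^2)$ be conformal. Then there exists a homeomorphism $H:\overline{U}\times\mathbb{R}\to\overline{U}\times\mathbb{R}$ with $H(U\times\mathbb{R})=U\times\mathbb{R}$ such that $\Psi H\Psi^{-1}:\operatorname{int}(D^2)\times\mathbb{R}\to\operatorname{int}(D^2)\times\mathbb{R}$ does not extend to a homeomorphism of $D^2\times\mathbb{R}$.
   Context: $D^2$ is the closed unit disk; $\Psi:U\times\mathbb{R}\to\operatorname{int}(D^2)\times\mathbb{R}$ is defined by $\Psi(u,t)=(\psi(u),t)$. *)

theory Defs
  imports "HOL-Complex_Analysis.Complex_Analysis"
begin

text \<open>The standard Warsaw circle in the plane (identified with the complex numbers):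
  the closure of the topologist's sine curve, i.e. the graph of sin(1/x) over (0,1]
  together with the limit bar {0} x [-1,1], closed up by the polygonal arc
  (0,-1) -> (0,-2) -> (1,-2) -> (1, sin 1).\<close>

definition standard_warsaw_circle :: "complex set" where
  "standard_warsaw_circle =
     {Complex x (sin (1 / x)) | x. 0 < x \<and> x \<le> 1}
   \<union> {Complex 0 y | y. -2 \<le> y \<and> y \<le> 1}
   \<union> {Complex x (-2) | x. 0 \<le> x \<and> x \<le> 1}
   \<union> {Complex 1 y | y. -2 \<le> y \<and> y \<le> sin 1}"

definition standard_warsaw :: "complex set \<Rightarrow> bool" where
  "standard_warsaw W \<longleftrightarrow>
     (\<exists>h k. homeomorphism UNIV UNIV h k \<and> W = h ` standard_warsaw_circle)"

definition Psi_map :: "(complex \<Rightarrow> complex) \<Rightarrow> complex \<times> real \<Rightarrow> complex \<times> real" where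
  "Psi_map psi = (\<lambda>(u, t). (psi u, t))"

definition Psi_inv :: "complex set \<Rightarrow> (complex \<Rightarrow> complex) \<Rightarrow> complex \<times> real \<Rightarrow> complex \<times> real" where
  "Psi_inv U psi = (\<lambda>(z, t). (inv_into U psi z, t))"

end

theory Submission
  imports Defs
begin


definition U0 :: "complex set" where
  "U0 = {z. 0 < Re z \<and> Re z < 1 \<and> -2 < Im z \<and> Im z < sin (1 / Re z)}"

lemma W0_iff: "z \<in> standard_warsaw_circle \<longleftrightarrow>
   (0 < Re z \<and> Re z \<le> 1 \<and> Im z = sin (1 / Re z)) \<or> (Re z = 0 \<and> -2 \<le> Im z \<and> Im z \<le> 1)
 \<or> (Im z = -2 \<and> 0 \<le> Re z \<and> Re z \<le> 1) \<or> (Re z = 1 \<and> -2 \<le> Im z \<and> Im z \<le> sin 1)"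
  unfolding standard_warsaw_circle_def by (auto simp: complex_eq_iff)

lemma U0_W0: "U0 \<inter> standard_warsaw_circle = {}"
  by (auto simp: U0_def W0_iff)

lemma open_U0: "open U0"
proof -
  have "U0 = {z. 0 < Re z \<and> Re z < 1} \<inter> (\<lambda>z. sin (1 / Re z) - Im z) -` {0<..} \<inter> {z. -2 < Im z}"
    unfolding U0_def by auto
  moreover have "open ({z. 0 < Re z \<and> Re z < 1} \<inter> (\<lambda>z. sin (1 / Re z) - Im z) -` {0<..})"
    apply (rule continuous_open_preimage)
      apply (intro continuous_intros) apply auto[1]
     apply (simp add: open_Collect_conj open_halfspace_Re_gt open_halfspace_Re_lt)
    by simp
  moreover have "open {z. -2 < Im z}" using open_halfspace_Im_gt[of "-2"] by (simp add: Collect_mono_iff)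
  ultimately show ?thesis by (metis open_Int)
qed

lemma connected_U0: "connected U0"
proof -
  define c where "c = Complex (1/2) (-3/2)"
  define S where "S z = (\<lambda>t. Complex (Re z) t) ` {min (Im z) (-3/2) .. max (Im z) (-3/2)}
      \<union> (\<lambda>s. Complex s (-3/2)) ` {min (Re z) (1/2) .. max (Re z) (1/2)}" for z
  have ci: "continuous_on A (\<lambda>t. Complex a t)" for A a
  proof -
    have "(\<lambda>t. Complex a t) = (\<lambda>t. complex_of_real a + \<i> * complex_of_real t)"
      by (auto simp: complex_eq_iff)
    then show ?thesis by (simp add: continuous_intros)
  qed
  have cj: "continuous_on A (\<lambda>s. Complex s a)" for A a
  proof -
    have "(\<lambda>s. Complex s a) = (\<lambda>s. complex_of_real s + \<i> * complex_of_real a)"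
      by (auto simp: complex_eq_iff)
    then show ?thesis by (simp add: continuous_intros)
  qed
  have conn: "connected (S z)" for z
    unfolding S_def
    apply (rule connected_Un)
      apply (rule connected_continuous_image[OF ci]) apply simp
     apply (rule connected_continuous_image[OF cj]) apply simp
    apply (rule ccontr) apply simp
    apply (drule equals0D[of _ "Complex (Re z) (-3/2)"])
    by (auto simp: image_iff)
  have sub: "S z \<subseteq> U0" if "z \<in> U0" for z
  proof -
    show ?thesis using that unfolding S_def U0_def
      apply auto
      subgoal for y unfolding max_def apply (auto split: if_splits) using sin_ge_minus_one[of "1/Re z"] by linarith
      subgoal for y using sin_ge_minus_one[of "1/y"] by linarith
      done
  qed
  have cS: "c \<in> S z" for z
    unfolding S_def c_def by (rule UnI2) (rule image_eqI[where x="1/2"], auto)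
  have eq: "U0 = \<Union> (S ` U0)"
  proof
    show "U0 \<subseteq> \<Union> (S ` U0)"
    proof
      fix z assume "z \<in> U0"
      moreover have "z \<in> S z" unfolding S_def by (auto simp: image_iff complex_eq_iff)
      ultimately show "z \<in> \<Union> (S ` U0)" by blast
    qed
  qed (use sub in blast)
  have "c \<in> \<Inter> (S ` U0)" using cS by simp
  then have "\<Inter> (S ` U0) \<noteq> {}" by (metis empty_iff)
  then have "connected (\<Union> (S ` U0))"
    by (intro connected_Union) (auto simp: conn)
  then show ?thesis using eq by metis
qed

lemma ray_out:
  assumes "p \<notin> standard_warsaw_circle" "p \<notin> U0"
  obtains d where "norm d = 1" "\<And>s. s \<ge> 0 \<Longrightarrow> p + of_real s * d \<notin> standard_warsaw_circle"
proof -
  have s1: "sin (1 / x) \<le> 1 \<and> sin (1/x) \<ge> -1" for x :: real using sin_le_one[of "1/x"] sin_ge_minus_one[of "1/x"] by auto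
  consider "Re p < 0" | "Re p > 1" | "Im p < -2" "0 \<le> Re p" "Re p \<le> 1" | "Im p \<ge> -2" "0 \<le> Re p" "Re p \<le> 1"
    by linarith
  then show ?thesis
  proof cases
    case 1
    show ?thesis
    proof (rule that[of "-1"])
      fix s :: real assume s: "s \<ge> 0"
      have "Re (p + of_real s * -1) < 0" using 1 s by simp
      then show "p + of_real s * -1 \<notin> standard_warsaw_circle"
        unfolding W0_iff by linarith
    qed simp
  next
    case 2
    show ?thesis
    proof (rule that[of "1"])
      fix s :: real assume s: "s \<ge> 0"
      have "Re (p + of_real s * 1) > 1" using 2 s by simp
      then show "p + of_real s * 1 \<notin> standard_warsaw_circle"
        unfolding W0_iff by linarith
    qed simp
  next
    case 3
    show ?thesis
    proof (rule that[of "-\<i>"])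
      fix s :: real assume s: "s \<ge> 0"
      have "Im (p + of_real s * -\<i>) < -2" using 3 s by simp
      moreover have "sin (1 / Re (p + of_real s * -\<i>)) \<ge> -1" using s1 by blast
      ultimately show "p + of_real s * -\<i> \<notin> standard_warsaw_circle"
        unfolding W0_iff by linarith
    qed simp
  next
    case 4
    have up: "Im p > 1 \<and> Re p = 0 \<or> Im p > sin (1 / Re p) \<and> 0 < Re p"
      using 4 assms unfolding W0_iff U0_def
      by (smt (verit) sin_le_one div_by_1 mem_Collect_eq)
    show ?thesis
    proof (rule that[of "\<i>"])
      fix s :: real assume s: "s \<ge> 0"
      have e: "Re (p + of_real s * \<i>) = Re p" "Im (p + of_real s * \<i>) = Im p + s" by simp_all
      show "p + of_real s * \<i> \<notin> standard_warsaw_circle"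
        unfolding W0_iff e using up 4 s s1[of 1] apply auto
        using sin_ge_minus_one[of "1/Re p"] by linarith
    qed simp
  qed
qed



lemma U_eq:
  fixes h k :: "complex \<Rightarrow> complex" and U W :: "complex set"
  assumes hk: "homeomorphism UNIV UNIV h k" and W: "W = h ` standard_warsaw_circle"
    and U: "U \<in> components (- W)" and bU: "bounded U"
  shows "\<forall>u\<in>U. k u \<in> U0" "\<forall>v\<in>U0. h v \<in> U"
proof -
  have kh: "\<And>x. k (h x) = x" and hk': "\<And>y. h (k y) = y"
    using hk unfolding homeomorphism_def by auto
  have hc: "continuous_on UNIV h" and kc: "continuous_on UNIV k"
    using hk unfolding homeomorphism_def by auto
  have memW: "u \<in> W \<longleftrightarrow> k u \<in> standard_warsaw_circle" for u
  proof
    assume "u \<in> W" then obtain w where "w \<in> standard_warsaw_circle" "u = h w" unfolding W by blast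
    then show "k u \<in> standard_warsaw_circle" by (simp add: kh)
  next
    assume "k u \<in> standard_warsaw_circle"
    then show "u \<in> W" using imageI[of "k u" _ h] hk' unfolding W by simp
  qed
  have Usub: "U \<subseteq> - W" using in_components_subset[OF U] .
  have bkU: "bounded (k ` U)"
  proof -
    have cc: "compact (closure U)" using bU by simp
    have "compact (k ` closure U)"
      by (rule compact_continuous_image[OF continuous_on_subset[OF kc] cc]) simp
    then show ?thesis
      by (meson bounded_subset closure_subset compact_imp_bounded image_mono)
  qed
  show A: "\<forall>u\<in>U. k u \<in> U0"
  proof
    fix u assume uU: "u \<in> U"
    show "k u \<in> U0"
    proof (rule ccontr)
      assume nU0: "k u \<notin> U0"
      have nW: "k u \<notin> standard_warsaw_circle" using uU Usub memW by auto
      obtain d where d1: "norm d = 1" and dW: "\<And>s. s \<ge> 0 \<Longrightarrow> k u + of_real s * d \<notin> standard_warsaw_circle"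
        using ray_out[OF nW nU0] by blast
      define R where "R = (\<lambda>s. k u + of_real s * d) ` {0..}"
      have cR: "connected R" unfolding R_def
        by (intro connected_continuous_image continuous_intros) (simp add: is_interval_connected is_interval_ci)
      have kuR: "k u \<in> R" unfolding R_def by (rule image_eqI[where x=0]) auto
      have c1: "connected (h ` R)"
        by (rule connected_continuous_image[OF continuous_on_subset[OF hc] cR]) simp
      have c2: "h ` R \<subseteq> - W"
        using dW unfolding R_def by (auto simp: memW kh)
      have "u \<in> h ` R" using imageI[OF kuR, of h] hk' by simp
      then have c3: "U \<inter> h ` R \<noteq> {}" using uU by blast
      have "h ` R \<subseteq> U" using components_maximal[OF U c1 c2 c3] .
      have "R \<subseteq> k ` U"
      proof
        fix x assume "x \<in> R"
        then have "h x \<in> U" using \<open>h ` R \<subseteq> U\<close> by blast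
        then show "x \<in> k ` U" using imageI[of "h x" U k] kh by simp
      qed
      then have "bounded R" using bkU bounded_subset by blast
      then obtain B where B: "\<And>x. x \<in> R \<Longrightarrow> norm x \<le> B" by (meson bounded_iff)
      define s where "s = B + norm (k u) + 1"
      have "s \<ge> 0" unfolding s_def using B[OF kuR] norm_ge_zero[of "k u"] by linarith
      then have "k u + of_real s * d \<in> R" unfolding R_def by auto
      then have "norm (k u + of_real s * d) \<le> B" by (rule B)
      moreover have "norm (k u + of_real s * d) \<ge> s - norm (k u)"
        using norm_diff_ineq[of "of_real s * d" "k u"] \<open>s \<ge> 0\<close> d1
        by (simp add: norm_mult add.commute)
      ultimately show False unfolding s_def by simp
    qed
  qed
  show "\<forall>v\<in>U0. h v \<in> U"
  proof -
    obtain u where uU: "u \<in> U" using U in_components_nonempty by blast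
    have c1: "connected (h ` U0)"
      by (rule connected_continuous_image[OF continuous_on_subset[OF hc] connected_U0]) simp
    have c2: "h ` U0 \<subseteq> - W" using U0_W0 by (auto simp: memW kh)
    have "u \<in> h ` U0" using imageI[of "k u" U0 h] A uU hk' by simp
    then have c3: "U \<inter> h ` U0 \<noteq> {}" using uU by blast
    have "h ` U0 \<subseteq> U" using components_maximal[OF U c1 c2 c3] .
    then show ?thesis by blast
  qed
qed



lemma seq_facts:
  fixes n m :: nat
  defines "x \<equiv> \<lambda>n::nat. 1 / (pi/2 + 2 * real n * pi)"
    and "a \<equiv> \<lambda>n::nat. 1 / (3/2*pi + 2 * real n * pi)"
  shows "0 < x n" "x n < 1" "sin (1 / x n) = 1" "sin (1 / a n) = -1"
    "n < m \<Longrightarrow> x m \<le> a n" "a n \<le> x n"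
proof -
  have p: "pi/2 + 2 * real k * pi > 1" for k
  proof -
    have "0 \<le> 2 * real k * pi" by simp
    then show ?thesis using pi_gt3 by linarith
  qed
  have q: "3/2*pi + 2 * real k * pi > 0" for k
  proof -
    have "0 \<le> 2 * real k * pi" by simp
    then show ?thesis using pi_gt3 by linarith
  qed
  show "0 < x n" unfolding x_def using p[of n] by simp
  show "x n < 1" unfolding x_def using p[of n] by simp
  have "sin (pi/2 + 2 * real n * pi) = 1" by (simp add: sin_add)
  then show "sin (1 / x n) = 1" unfolding x_def by simp
  have "sin (3/2*pi + 2 * real n * pi) = sin (3/2*pi) * cos (2 * real n * pi) + cos (3/2*pi) * sin (2 * real n * pi)"
    by (rule sin_add)
  also have "\<dots> = -1" by (simp only: sin_3over2_pi cos_3over2_pi cos_2npi sin_2npi)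
  finally have "sin (3/2*pi + 2 * real n * pi) = -1" .
  then show "sin (1 / a n) = -1" unfolding a_def by simp
  show "a n \<le> x n" unfolding a_def x_def
    by (rule divide_left_mono) (use p[of n] p[of m] q[of n] q[of m] in \<open>auto intro!: mult_pos_pos\<close>)
  assume "n < m"
  then have "real n + 1 \<le> real m" by simp
  then have "(real n + 1) * (2 * pi) \<le> real m * (2*pi)" by (rule mult_right_mono) simp
  moreover have "(real n + 1) * (2*pi) = 2 * real n * pi + 2*pi" "real m * (2*pi) = 2 * real m * pi"
    by (simp_all add: algebra_simps)
  ultimately have le: "2 * real n * pi + 2*pi \<le> 2 * real m * pi" by linarith
  have gen: "\<And>A B P::real. A + 2*P \<le> B \<Longrightarrow> P \<ge> 0 \<Longrightarrow> 3/2*P + A \<le> P/2 + B" by linarith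
  have "3/2*pi + 2 * real n * pi \<le> pi/2 + 2 * real m * pi" by (rule gen[OF le pi_ge_zero])
  then show "x m \<le> a n" unfolding a_def x_def
    by (rule divide_left_mono) (use p[of n] p[of m] q[of n] q[of m] in \<open>auto intro!: mult_pos_pos\<close>)
qed



theorem mainTheorem2:
  fixes W U :: "complex set" and psi :: "complex \<Rightarrow> complex"
  assumes "standard_warsaw W"
    and "U \<in> components (- W)" and "bounded U"
    and "psi holomorphic_on U" and "bij_betw psi U (ball 0 1)"
  shows "\<exists>H H'. homeomorphism (closure U \<times> (UNIV :: real set)) (closure U \<times> UNIV) H H'
            \<and> H ` (U \<times> UNIV) = U \<times> UNIV
            \<and> \<not> (\<exists>G G'. homeomorphism (cball 0 1 \<times> (UNIV :: real set)) (cball 0 1 \<times> UNIV) G G'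
                   \<and> (\<forall>p \<in> ball 0 1 \<times> UNIV. G p = Psi_map psi (H (Psi_inv U psi p))))"
proof -
  obtain h k where hk: "homeomorphism UNIV UNIV h k" and W: "W = h ` standard_warsaw_circle"
    using assms(1) unfolding standard_warsaw_def by blast
  have kh: "\<And>x. k (h x) = x" and hk': "\<And>y. h (k y) = y"
    using hk unfolding homeomorphism_def by auto
  have hc: "continuous_on UNIV h" and kc: "continuous_on UNIV k"
    using hk unfolding homeomorphism_def by auto
  have kU: "\<forall>u\<in>U. k u \<in> U0" and hU0: "\<forall>v\<in>U0. h v \<in> U"
    using U_eq[OF hk W assms(2,3)] by auto
  have Ueq: "U = UNIV \<inter> k -` U0"
    using kU hU0 hk' by (metis Int_UNIV_left subsetI subset_antisym vimageE vimageI)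
  have oU: "open U" unfolding Ueq by (rule continuous_open_preimage[OF kc open_UNIV open_U0])
  have pc: "continuous_on U psi" using assms(4) by (rule holomorphic_on_imp_continuous_on)
  have inj: "inj_on psi U" and im: "psi ` U = ball 0 1" using assms(5) unfolding bij_betw_def by auto
  obtain g where g: "homeomorphism U (psi ` U) psi g"
    using invariance_of_domain_homeomorphism[OF oU pc _ inj] by auto
  have invc: "continuous_on (ball 0 1) (inv_into U psi)"
  proof (rule continuous_on_cong[THEN iffD1])
    show "continuous_on (ball 0 1) g" using g im unfolding homeomorphism_def by auto
    fix z :: complex assume "z \<in> ball 0 1"
    then obtain u where "u \<in> U" "z = psi u" using im by (metis imageE)
    then show "g z = inv_into U psi z" using g inj unfolding homeomorphism_def by auto
  qed simp
  define th where "th = (\<lambda>z. k (inv_into U psi z))"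
  have thc: "continuous_on (ball 0 1) th"
    unfolding th_def by (rule continuous_on_compose2[OF kc invc]) auto
  have thU0: "th z \<in> U0" if "z \<in> ball 0 1" for z
    unfolding th_def using kU inv_into_into[of z psi U] that im by auto
  define H where "H = (\<lambda>p::complex \<times> real. (fst p, snd p + Im (k (fst p))))"
  define H' where "H' = (\<lambda>p::complex \<times> real. (fst p, snd p - Im (k (fst p))))"
  have Hc: "continuous_on A H" for A
    unfolding H_def
    by (intro continuous_intros continuous_on_compose2[OF kc] continuous_on_fst continuous_on_id) auto
  have H'c: "continuous_on A H'" for A
    unfolding H'_def
    by (intro continuous_intros continuous_on_compose2[OF kc] continuous_on_fst continuous_on_id) auto
  have homH: "homeomorphism (closure U \<times> (UNIV :: real set)) (closure U \<times> UNIV) H H'"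
    by (rule homeomorphismI[OF Hc H'c]) (auto simp: H_def H'_def)
  have imH: "H ` (U \<times> UNIV) = U \<times> UNIV"
  proof
    show "H ` (U \<times> UNIV) \<subseteq> U \<times> UNIV" by (auto simp: H_def)
    show "U \<times> UNIV \<subseteq> H ` (U \<times> UNIV)"
    proof
      fix p assume "p \<in> U \<times> (UNIV :: real set)"
      then show "p \<in> H ` (U \<times> UNIV)"
        by (intro image_eqI[where x="H' p"]) (auto simp: H_def H'_def)
    qed
  qed
  have nonext: False if G: "homeomorphism (cball 0 1 \<times> (UNIV :: real set)) (cball 0 1 \<times> UNIV) G G'"
    and Geq: "\<forall>p \<in> ball 0 1 \<times> UNIV. G p = Psi_map psi (H (Psi_inv U psi p))" for G G'
  proof -
    define gb where "gb = (\<lambda>z. snd (G (z, 0::real)))"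
    have Gc: "continuous_on (cball 0 1 \<times> (UNIV :: real set)) G" using G unfolding homeomorphism_def by auto
    have "continuous_on (cball 0 1) (\<lambda>z. G (z, 0::real))"
      by (rule continuous_on_compose2[OF Gc]) (auto intro!: continuous_intros)
    then have gbc: "continuous_on (cball 0 1) gb" unfolding gb_def by (rule continuous_on_snd)
    have gbth: "gb z = Im (th z)" if "z \<in> ball 0 1" for z
      using Geq[rule_format, of "(z, 0)"] that
      by (simp add: gb_def th_def Psi_map_def Psi_inv_def H_def)
    define x where "x = (\<lambda>n::nat. 1 / (pi/2 + 2 * real n * pi))"
    define a where "a = (\<lambda>n::nat. 1 / (3/2*pi + 2 * real n * pi))"
    have sf1: "0 < x n" "x n < 1" "sin (1 / x n) = 1" "sin (1 / a n) = -1" "a n \<le> x n" for n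
      using seq_facts(1,2,3,4,6)[of n] unfolding x_def a_def by blast+
    have sf5: "x m \<le> a n" if "n < m" for n m
      using seq_facts(5)[OF that] unfolding x_def a_def by blast
    define u where "u = (\<lambda>n. complex_of_real (x n))"
    have uU0: "u n \<in> U0" for n
      using sf1(1,2,3)[of n] unfolding U0_def u_def by simp
    define zs where "zs = (\<lambda>n. psi (h (u n)))"
    have zsb: "zs n \<in> ball 0 1" for n
      unfolding zs_def using hU0 uU0 im by blast
    have thzs: "th (zs n) = u n" for n
      unfolding th_def zs_def using inv_into_f_f[OF inj, of "h (u n)"] hU0 uU0 kh by simp
    obtain l r where l: "l \<in> cball 0 1" and r: "strict_mono (r :: nat \<Rightarrow> nat)" and lim: "(zs \<circ> r) \<longlonglongrightarrow> l"
    proof -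
      have "\<forall>n. zs n \<in> cball 0 1" using zsb by (simp add: less_imp_le)
      then show ?thesis using seq_compactE[OF compact_imp_seq_compact[OF compact_cball], of zs 0 1] that by blast
    qed
    obtain d where d: "d > 0" and dd: "\<And>z. z \<in> cball 0 1 \<Longrightarrow> dist z l < d \<Longrightarrow> dist (gb z) (gb l) < 1/2"
      using gbc l unfolding continuous_on_iff by (metis half_gt_zero zero_less_one)
    obtain N where N: "\<And>n. n \<ge> N \<Longrightarrow> dist ((zs \<circ> r) n) l < d"
      using lim d unfolding LIMSEQ_def by blast
    define n1 where "n1 = r N"
    define n2 where "n2 = r (Suc N)"
    have n12: "n1 < n2" unfolding n1_def n2_def using r by (simp add: strict_mono_def)
    define D where "D = ball l d \<inter> ball 0 1"
    have z1D: "zs n1 \<in> D" unfolding D_def n1_def using N[of N] zsb by (auto simp: dist_commute)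
    have z2D: "zs n2 \<in> D" unfolding D_def n2_def using N[of "Suc N"] zsb by (auto simp: dist_commute)
    have cD: "connected (th ` D)"
      by (rule connected_continuous_image[OF continuous_on_subset[OF thc]])
        (auto simp: D_def intro: convex_connected convex_Int)
    have "u n2 \<in> th ` D" using z2D thzs by (metis image_eqI)
    moreover have "u n1 \<in> th ` D" using z1D thzs by (metis image_eqI)
    moreover have "u n2 \<bullet> 1 \<le> a n1" using sf5[OF n12] unfolding u_def by simp
    moreover have "a n1 \<le> u n1 \<bullet> 1" using sf1(5)[of n1] unfolding u_def by simp
    ultimately obtain w where wD: "w \<in> th ` D" and wa: "w \<bullet> 1 = a n1"
      using connected_ivt_component[OF cD] by blast
    then obtain z where zD: "z \<in> D" and wz: "w = th z" by blast
    have zb: "z \<in> ball 0 1" using zD D_def by auto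
    have "Im (th z) < sin (1 / Re (th z))" using thU0[OF zb] unfolding U0_def by simp
    then have i1: "Im (th z) < -1" using wa wz sf1(4)[of n1] by simp
    have "dist (gb z) (gb l) < 1/2" using zD zb by (intro dd) (auto simp: D_def dist_commute intro: less_imp_le)
    then have i2: "\<bar>Im (th z) - gb l\<bar> < 1/2" using gbth[OF zb] by (simp add: dist_real_def)
    have "dist (gb (zs n1)) (gb l) < 1/2" using z1D zsb by (intro dd) (auto simp: D_def dist_commute intro: less_imp_le)
    moreover have "gb (zs n1) = 0" using gbth[OF zsb] thzs unfolding u_def by simp
    ultimately have i3: "\<bar>gb l\<bar> < 1/2" by (simp add: dist_real_def)
    show False using i1 i2 i3 by linarith
  qed
  show ?thesis using homH imH nonext by blast
qed

end
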